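(* For all integers $n,k\ge 0$ and every $x$ with $|x|<1$, \[ \sum_{d=k+1}^\infty d^n x^d = \sum_{i=0}^n \frac{e_{n,i}^k\, x^{k+i+1}}{(1-x)^{n+1}}. \]
   Context: For a fixed integer parameter $k$, the numbers $e^k_{n,i}$ are defined by $e^k_{0,0}=1$, $e^k_{n,i}=0$ whenever $i<0$ or $i>n$, and $e^k_{n,i}=(k+i+1)\,e^k_{n-1,i}+(n-k-i)\,e^k_{n-1,i-1}$ for all other integers $n,i$. *)

theory Defs
  imports Complex_Main
begin

fun ecoef :: "int \<Rightarrow> nat \<Rightarrow> int \<Rightarrow> int" where
  "ecoef k 0 i = (if i = 0 then 1 else 0)"
| "ecoef k (Suc n) i =
     (if i < 0 \<or> i > int (Suc n) then 0
      else (k + i + 1) * ecoef k n i + (int (Suc n) - k - i) * ecoef k n (i - 1))"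

end

theory Submission
  imports Defs
begin

lemma ecoef_neg: "i < 0 \<Longrightarrow> ecoef k n i = 0"
  by (cases n) auto

lemma ecoef_big: "i > int n \<Longrightarrow> ecoef k n i = 0"
  by (induction n arbitrary: i) auto

definition E :: "nat \<Rightarrow> nat \<Rightarrow> nat \<Rightarrow> real" where
  "E k n i = real_of_int (ecoef (int k) n (int i))"

definition P :: "nat \<Rightarrow> nat \<Rightarrow> real \<Rightarrow> real" where
  "P k n x = (\<Sum>i = 0..n. E k n i * x ^ (k + i + 1))"

definition P' :: "nat \<Rightarrow> nat \<Rightarrow> real \<Rightarrow> real" where
  "P' k n x = (\<Sum>i = 0..n. E k n i * real (k + i + 1) * x ^ (k + i))"

lemma E_Suc: "i \<le> Suc n \<Longrightarrow> E k (Suc n) i =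
   real (k + i + 1) * E k n i + (if i = 0 then 0 else (real n - real k - real i + 1) * E k n (i - 1))"
  unfolding E_def
  by (cases "i = 0") (auto simp: ecoef_neg of_nat_diff algebra_simps)

lemma E_big: "i > n \<Longrightarrow> E k n i = 0"
  unfolding E_def by (simp add: ecoef_big)

lemma P_Suc: "P k (Suc n) x = x * (1 - x) * P' k n x + real (Suc n) * x * P k n x"
proof -
  have "P k (Suc n) x = (\<Sum>i = 0..Suc n. real (k + i + 1) * E k n i * x ^ (k + i + 1))
      + (\<Sum>i = 0..Suc n. (if i = 0 then 0 else (real n - real k - real i + 1) * E k n (i - 1)) * x ^ (k + i + 1))"
    unfolding P_def by (simp add: E_Suc sum.distrib algebra_simps del: sum.atLeast0_atMost_Suc)
  also have "(\<Sum>i = 0..Suc n. real (k + i + 1) * E k n i * x ^ (k + i + 1))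
       = (\<Sum>i = 0..n. real (k + i + 1) * E k n i * x ^ (k + i + 1))"
    by (simp add: E_big)
  also have "(\<Sum>i = 0..Suc n. (if i = 0 then 0 else (real n - real k - real i + 1) * E k n (i - 1)) * x ^ (k + i + 1))
       = (\<Sum>i = 0..n. (real n - real k - real i) * E k n i * x ^ (k + i + 2))"
    by (subst sum.atLeast0_atMost_Suc_shift) (simp add: algebra_simps)
  finally show ?thesis
    unfolding P_def P'_def
    by (simp add: sum_distrib_left sum_distrib_right sum.distrib[symmetric] algebra_simps power_add sum_subtractf[symmetric])
qed


definition Q :: "nat \<Rightarrow> nat \<Rightarrow> real \<Rightarrow> real" where
  "Q k n x = P k n x / (1 - x) ^ (n + 1)"

definition C :: "nat \<Rightarrow> nat \<Rightarrow> nat \<Rightarrow> real" where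
  "C k n d = (if k + 1 \<le> d then real d ^ n else 0)"

lemma P_deriv: "(P k n has_field_derivative P' k n x) (at x)"
  unfolding P_def[abs_def] P'_def
proof (rule DERIV_sum)
  fix i assume "i \<in> {0..n}"
  show "((\<lambda>x. E k n i * x ^ (k + i + 1)) has_field_derivative E k n i * real (k + i + 1) * x ^ (k + i)) (at x)"
    using DERIV_cmult[OF DERIV_pow[of "k + i + 1" x UNIV], of "E k n i"] by (simp add: mult_ac)
qed

lemma Q_deriv:
  assumes "x \<noteq> 1"
  shows "(Q k n has_field_derivative (P' k n x * (1 - x) + real (n + 1) * P k n x) / (1 - x) ^ (n + 2)) (at x)"
proof -
  have "(Q k n has_field_derivative
     (P' k n x * (1 - x) ^ (n + 1) - P k n x * (real (n + 1) * (- 1 * (1 - x) ^ n))) / ((1 - x) ^ (n + 1) * (1 - x) ^ (n + 1))) (at x)"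
    unfolding Q_def[abs_def]
    using assms by (intro DERIV_divide P_deriv DERIV_power derivative_eq_intros refl) auto
  moreover have "(P' k n x * (1 - x) ^ (n + 1) - P k n x * (real (n + 1) * (- 1 * (1 - x) ^ n))) / ((1 - x) ^ (n + 1) * (1 - x) ^ (n + 1))
     = (P' k n x * (1 - x) + real (n + 1) * P k n x) / (1 - x) ^ (n + 2)"
  proof -
    define a where "a = 1 - x"
    have a: "a \<noteq> 0" using assms by (simp add: a_def)
    have n1: "P' k n x * a ^ (n + 1) - P k n x * (real (n + 1) * (- 1 * a ^ n)) = a ^ n * (P' k n x * a + real (n + 1) * P k n x)"
      by (simp add: algebra_simps)
    have d1: "a ^ (n + 1) * a ^ (n + 1) = a ^ n * a ^ (n + 2)"
      by (simp add: algebra_simps power_add[symmetric])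
    show ?thesis unfolding a_def[symmetric] n1 d1 using a by simp
  qed
  ultimately show ?thesis by simp
qed

lemma base: "\<bar>x\<bar> < 1 \<Longrightarrow> (\<lambda>d. C k 0 d * x ^ d) sums Q k 0 x"
proof -
  assume x: "\<bar>x\<bar> < 1"
  have "(\<lambda>d. x ^ (k + 1) * x ^ d) sums (x ^ (k + 1) * (1 / (1 - x)))"
    using geometric_sums[of x] x by (intro sums_mult) auto
  moreover have "(\<lambda>d. x ^ (k + 1) * x ^ d) = (\<lambda>i. C k 0 (i + (k + 1)) * x ^ (i + (k + 1)))"
    by (simp add: C_def fun_eq_iff power_add mult_ac)
  ultimately have "(\<lambda>i. C k 0 (i + (k + 1)) * x ^ (i + (k + 1))) sums (x ^ (k + 1) * (1 / (1 - x)))"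
    by simp
  hence "(\<lambda>d. C k 0 d * x ^ d) sums (x ^ (k + 1) * (1 / (1 - x)) + (\<Sum>i<k+1. C k 0 i * x ^ i))"
    by (rule sums_iff_shift[THEN iffD1])
  moreover have "(\<Sum>i<k+1. C k 0 i * x ^ i) = 0"
    by (simp add: C_def)
  ultimately have "(\<lambda>d. C k 0 d * x ^ d) sums (x ^ (k + 1) * (1 / (1 - x)))"
    by simp
  moreover have "Q k 0 x = x ^ (k + 1) * (1 / (1 - x))"
    by (simp add: Q_def P_def E_def)
  ultimately show ?thesis by simp
qed

lemma main: "\<bar>x\<bar> < 1 \<Longrightarrow> (\<lambda>d. C k n d * x ^ d) sums Q k n x"
proof (induction n arbitrary: x)
  case 0
  then show ?case by (rule base)
next
  case (Suc n)
  have sm: "summable (\<lambda>d. C k n d * z ^ d)" if "norm z < 1" for z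
    using Suc.IH[of z] that by (auto simp: sums_iff)
  have x: "norm x < 1" using Suc.prems by simp
  have d1: "((\<lambda>z. \<Sum>d. C k n d * z ^ d) has_field_derivative (\<Sum>d. diffs (C k n) d * x ^ d)) (at x)"
    by (rule termdiffs_strong'[OF sm x])
  have s2: "summable (\<lambda>d. diffs (C k n) d * x ^ d)"
    by (rule termdiff_converges[OF x sm])
  have "(Q k n has_field_derivative (\<Sum>d. diffs (C k n) d * x ^ d)) (at x)"
    apply (rule has_field_derivative_transform_within_open[OF d1, of "{-1<..<1}"])
    using Suc.prems Suc.IH by (auto simp: sums_iff)
  moreover have "x \<noteq> 1" using Suc.prems by auto
  ultimately have D: "(\<Sum>d. diffs (C k n) d * x ^ d) = (P' k n x * (1 - x) + real (n + 1) * P k n x) / (1 - x) ^ (n + 2)"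
    using Q_deriv DERIV_unique by blast
  have "(\<lambda>d. x * (diffs (C k n) d * x ^ d)) sums (x * (\<Sum>d. diffs (C k n) d * x ^ d))"
    using s2 by (intro sums_mult) (simp add: summable_sums)
  moreover have "(\<lambda>d. x * (diffs (C k n) d * x ^ d)) = (\<lambda>d. C k (Suc n) (Suc d) * x ^ Suc d)"
    by (auto simp: diffs_def C_def fun_eq_iff mult_ac)
  ultimately have "(\<lambda>d. C k (Suc n) (Suc d) * x ^ Suc d) sums (x * (\<Sum>d. diffs (C k n) d * x ^ d))"
    by simp
  hence "(\<lambda>d. C k (Suc n) d * x ^ d) sums (x * (\<Sum>d. diffs (C k n) d * x ^ d) + C k (Suc n) 0 * x ^ 0)"
    by (subst (asm) sums_Suc_iff)
  moreover have "x * (\<Sum>d. diffs (C k n) d * x ^ d) + C k (Suc n) 0 * x ^ 0 = Q k (Suc n) x"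
    unfolding D Q_def P_Suc by (simp add: C_def field_simps)
  ultimately show ?case by simp
qed

theorem corollary2p2:
  fixes n k :: nat and x :: real
  assumes "\<bar>x\<bar> < 1"
  shows "(\<lambda>d. if k + 1 \<le> d then real d ^ n * x ^ d else 0) sums
           (\<Sum>i = 0..n. real_of_int (ecoef (int k) n (int i)) * x ^ (k + i + 1) / (1 - x) ^ (n + 1))"
proof -
  have "(\<lambda>d. C k n d * x ^ d) sums Q k n x" by (rule main[OF assms])
  moreover have "(\<lambda>d. C k n d * x ^ d) = (\<lambda>d. if k + 1 \<le> d then real d ^ n * x ^ d else 0)"
    by (auto simp: C_def fun_eq_iff)
  moreover have "Q k n x = (\<Sum>i = 0..n. real_of_int (ecoef (int k) n (int i)) * x ^ (k + i + 1) / (1 - x) ^ (n + 1))"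
    by (simp add: Q_def P_def E_def sum_divide_distrib)
  ultimately show ?thesis by simp
qed

end
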